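(* Let $\alpha>1$, $\delta\in(0,\alpha-1)$, $\tau\in(0,\alpha-1-\delta]$, $d\in\mathbb N$, $1\ge\gamma_1\ge\dots\ge\gamma_d>0$, and $g\in\mathcal A_{\alpha,\boldsymbol\gamma,d}$. Let $\boldsymbol x_1,\dots,\boldsymbol x_N\in[0,1]^d$, $c_1,\dots,c_N\in\mathbb R$. Let $L$ be a prime and $\mathcal Z=\{\boldsymbol z_0,\dots,\boldsymbol z_{L-1}\}$ a rank-1 lattice point set of size $L$ satisfying $e(H_{\beta,\boldsymbol\gamma,d},\mathcal Z)\le C_{\boldsymbol\gamma,d}(\beta,\tau')L^{-\beta+\tau'}$ for all $\tau'\in(0,\beta-\frac12]$, where $\beta=\alpha-\frac12-\delta$. Then for $\nu>1$, with $K=R^\alpha_{\nu,\boldsymbol\gamma,d}$, $$\Big|\frac1N\sum_{n=1}^Nc_ng(\boldsymbol x_n)-\frac1L\sum_{\ell=0}^{L-1}g(\boldsymbol z_\ell)\phi_K(\boldsymbol z_\ell)\Big|\le\mathrm{err}_1(g,\mathcal C)+\mathrm{err}_2(g,\mathcal C)\le\|g\|_{\mathcal A_{\alpha,\boldsymbol\gamma,d}}\Big[\frac1{\sqrt\nu}+\frac{\nu^{d/2}}{L^{\alpha-\frac12-\delta-\tau}}c_{\alpha,\boldsymbol\gamma,d}\,\zeta_{\delta,d}\,C_{\boldsymbol\gamma,d}\big(\alpha-\tfrac12-\delta,\tau\big)\Big]\overline\mu_N.$$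
   Context: $r_\beta(\gamma,h)=\max(|h|^{2\beta}/\gamma,1)$, $r_\beta(\boldsymbol\gamma,\boldsymbol k)=\prod_jr_\beta(\gamma_j,k_j)$; $\omega_{\boldsymbol k}(\boldsymbol x)=\exp(2\pi i\,\boldsymbol k\cdot\boldsymbol x)$, $\widehat f_{\boldsymbol k}=\int_{[0,1]^d}f\,\overline{\omega_{\boldsymbol k}}$. $\mathcal A_{\alpha,\boldsymbol\gamma,d}=\{f\in L_1([0,1]^d):\|f\|_{\mathcal A_{\alpha,\boldsymbol\gamma,d}}=\sum_{\boldsymbol k}\sqrt{r_\alpha(\boldsymbol\gamma,\boldsymbol k)}|\widehat f_{\boldsymbol k}|<\infty\}$; $H_{\beta,\boldsymbol\gamma,d}=\{f\in L_2:\|f\|^2_{H_{\beta,\boldsymbol\gamma,d}}=\sum_{\boldsymbol k}r_\beta(\boldsymbol\gamma,\boldsymbol k)|\widehat f_{\boldsymbol k}|^2<\infty\}$. Weighted $d$-dimensional rectangle: $R^\alpha_{\nu,\boldsymbol\gamma,d}=\{\boldsymbol k\in\mathbb Z^d:\max_{j}r_\alpha(\gamma_j,k_j)\le\nu\}$. $\phi_K(\boldsymbol x)=\sum_{\boldsymbol k\in K}\check\phi_{\boldsymbol k}\overline{\omega_{\boldsymbol k}(\boldsymbol x)}$, $\check\phi_{\boldsymbol k}=\frac1N\sum_nc_n\omega_{\boldsymbol k}(\boldsymbol x_n)$; $\mathcal C=(c_n)$; $\mathrm{err}_1(g,\mathcal C)=|\frac1N\sum_nc_ng(\boldsymbol x_n)-\int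 g\phi_K|$, $\mathrm{err}_2(g,\mathcal C)=|\int g\phi_K-\frac1L\sum_\ell(g\phi_K)(\boldsymbol z_\ell)|$. Rank-1 lattice of size $L$: $\{\boldsymbol z_\ell=(\ell\mathfrak g/L)\bmod1\}$, $\mathfrak g\in\{1,\dots,L-1\}^d$. $e(H_{\beta,\boldsymbol\gamma,d},\mathcal Z)=\sup_{\|f\|\le1}|\int f-\frac1L\sum_\ell f(\boldsymbol z_\ell)|$. $C_{\boldsymbol\gamma,d}(\beta,\tau)=2^{\beta-\tau}\prod_j[1+2\gamma_j^{1/(2(\beta-\tau))}\zeta(\frac\beta{\beta-\tau})]^{\beta-\tau}$; $\overline\mu_N=\frac1N\sum_n|c_n|$; $c_{\alpha,\boldsymbol\gamma,d}=\sqrt{\prod_j\max(1,2^{2\alpha}\gamma_j)}$; $\zeta_{\delta,d}=[1+2\zeta(1+2\delta)]^{d/2}$; $\zeta$ Riemann zeta. *)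

theory Defs
  imports "HOL-Analysis.Analysis"
begin

text \<open>Dimension d = CARD('d); index type 'd is finite and linearly ordered
  (the order is used to state the monotonicity of the weights).\<close>

definition rw :: "real \<Rightarrow> real \<Rightarrow> int \<Rightarrow> real" where
  "rw \<beta> \<gamma> h = max (\<bar>real_of_int h\<bar> powr (2 * \<beta>) / \<gamma>) 1"

definition rvec :: "real \<Rightarrow> real^'d \<Rightarrow> int^'d \<Rightarrow> real" where
  "rvec \<beta> \<gamma> k = (\<Prod>j\<in>UNIV. rw \<beta> (\<gamma> $ j) (k $ j))"

definition omega :: "int^'d \<Rightarrow> real^'d \<Rightarrow> complex" where
  "omega k x = exp (2 * of_real pi * \<i> * of_real (\<Sum>j\<in>UNIV. real_of_int (k $ j) * x $ j))"

definition unit_cube :: "(real^'d) set" where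
  "unit_cube = cbox 0 One"

definition cube_integral :: "(real^'d \<Rightarrow> complex) \<Rightarrow> complex" where
  "cube_integral f = integral\<^sup>L (lebesgue_on unit_cube) f"

definition fourier_coeff :: "(real^'d \<Rightarrow> complex) \<Rightarrow> int^'d \<Rightarrow> complex" where
  "fourier_coeff f k = cube_integral (\<lambda>x. f x * cnj (omega k x))"

text \<open>Weighted Wiener-type space A: L1 function with finite weighted
  l1-norm of Fourier coefficients; as usual it is identified with (the
  continuous representative given by) its absolutely convergent Fourier series.\<close>

definition A_norm :: "real \<Rightarrow> real^'d \<Rightarrow> (real^'d \<Rightarrow> complex) \<Rightarrow> real" where
  "A_norm \<alpha> \<gamma> f = (\<Sum>\<^sub>\<infinity>k\<in>UNIV. sqrt (rvec \<alpha> \<gamma> k) * norm (fourier_coeff f k))"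

definition in_A :: "real \<Rightarrow> real^'d \<Rightarrow> (real^'d \<Rightarrow> complex) \<Rightarrow> bool" where
  "in_A \<alpha> \<gamma> f \<longleftrightarrow>
     integrable (lebesgue_on unit_cube) f \<and>
     (\<lambda>k. sqrt (rvec \<alpha> \<gamma> k) * norm (fourier_coeff f k)) summable_on UNIV \<and>
     (\<forall>x\<in>unit_cube. f x = (\<Sum>\<^sub>\<infinity>k\<in>UNIV. fourier_coeff f k * omega k x))"

text \<open>Weighted Korobov space H (squared norm), identified likewise with the
  Fourier series.\<close>

definition H_norm_sq :: "real \<Rightarrow> real^'d \<Rightarrow> (real^'d \<Rightarrow> complex) \<Rightarrow> real" where
  "H_norm_sq \<beta> \<gamma> f = (\<Sum>\<^sub>\<infinity>k\<in>UNIV. rvec \<beta> \<gamma> k * (norm (fourier_coeff f k))\<^sup>2)"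

definition in_H :: "real \<Rightarrow> real^'d \<Rightarrow> (real^'d \<Rightarrow> complex) \<Rightarrow> bool" where
  "in_H \<beta> \<gamma> f \<longleftrightarrow>
     f \<in> borel_measurable (lebesgue_on unit_cube) \<and>
     integrable (lebesgue_on unit_cube) (\<lambda>x. (norm (f x))\<^sup>2) \<and>
     (\<lambda>k. rvec \<beta> \<gamma> k * (norm (fourier_coeff f k))\<^sup>2) summable_on UNIV \<and>
     (\<forall>x\<in>unit_cube. f x = (\<Sum>\<^sub>\<infinity>k\<in>UNIV. fourier_coeff f k * omega k x))"

definition wce :: "real \<Rightarrow> real^'d \<Rightarrow> nat \<Rightarrow> (nat \<Rightarrow> real^'d) \<Rightarrow> ereal" where
  "wce \<beta> \<gamma> L z = (SUP f\<in>{f. in_H \<beta> \<gamma> f \<and> H_norm_sq \<beta> \<gamma> f \<le> 1}.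
      ereal (norm (cube_integral f - (1 / of_nat L) * (\<Sum>l<L. f (z l)))))"

definition lattice_pt :: "nat \<Rightarrow> nat^'d \<Rightarrow> nat \<Rightarrow> real^'d" where
  "lattice_pt L gv l = (\<chi> j. frac (real l * real (gv $ j) / real L))"

definition rzeta :: "real \<Rightarrow> real" where
  "rzeta s = (\<Sum>n. 1 / real (Suc n) powr s)"

definition Cconst :: "real^'d \<Rightarrow> real \<Rightarrow> real \<Rightarrow> real" where
  "Cconst \<gamma> \<beta> \<tau> = 2 powr (\<beta> - \<tau>) *
     (\<Prod>j\<in>UNIV. (1 + 2 * (\<gamma> $ j) powr (1 / (2 * (\<beta> - \<tau>))) * rzeta (\<beta> / (\<beta> - \<tau>))) powr (\<beta> - \<tau>))"

definition mubar :: "nat \<Rightarrow> (nat \<Rightarrow> real) \<Rightarrow> real" where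
  "mubar N c = (1 / real N) * (\<Sum>n=1..N. \<bar>c n\<bar>)"

definition cconst :: "real \<Rightarrow> real^'d \<Rightarrow> real" where
  "cconst \<alpha> \<gamma> = sqrt (\<Prod>j\<in>UNIV. max 1 (2 powr (2 * \<alpha>) * \<gamma> $ j))"

definition zeta_dd :: "real \<Rightarrow> nat \<Rightarrow> real" where
  "zeta_dd \<delta> d = (1 + 2 * rzeta (1 + 2 * \<delta>)) powr (real d / 2)"

definition Rect :: "real \<Rightarrow> real \<Rightarrow> real^'d \<Rightarrow> (int^'d) set" where
  "Rect \<alpha> \<nu> \<gamma> = {k. (MAX j. rw \<alpha> (\<gamma> $ j) (k $ j)) \<le> \<nu>}"

definition phi_check :: "nat \<Rightarrow> (nat \<Rightarrow> real) \<Rightarrow> (nat \<Rightarrow> real^'d) \<Rightarrow> int^'d \<Rightarrow> complex" where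
  "phi_check N c x k = (1 / of_nat N) * (\<Sum>n=1..N. of_real (c n) * omega k (x n))"

definition phiK :: "(int^'d) set \<Rightarrow> nat \<Rightarrow> (nat \<Rightarrow> real) \<Rightarrow> (nat \<Rightarrow> real^'d) \<Rightarrow> real^'d \<Rightarrow> complex" where
  "phiK K N c x y = (\<Sum>k\<in>K. phi_check N c x k * cnj (omega k y))"

definition err1 :: "(real^'d \<Rightarrow> real) \<Rightarrow> (int^'d) set \<Rightarrow> nat \<Rightarrow> (nat \<Rightarrow> real) \<Rightarrow> (nat \<Rightarrow> real^'d) \<Rightarrow> real" where
  "err1 g K N c x = norm ((1 / of_nat N) * (\<Sum>n=1..N. of_real (c n * g (x n)))
      - cube_integral (\<lambda>y. of_real (g y) * phiK K N c x y))"

definition err2 :: "(real^'d \<Rightarrow> real) \<Rightarrow> (int^'d) set \<Rightarrow> nat \<Rightarrow> (nat \<Rightarrow> real) \<Rightarrow> (nat \<Rightarrow> real^'d)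
      \<Rightarrow> nat \<Rightarrow> (nat \<Rightarrow> real^'d) \<Rightarrow> real" where
  "err2 g K N c x L z = norm (cube_integral (\<lambda>y. of_real (g y) * phiK K N c x y)
      - (1 / of_nat L) * (\<Sum>l<L. of_real (g (z l)) * phiK K N c x (z l)))"

end

theory Submission
  imports Defs
begin

lemma omega_add: "omega (h + k) y = omega h y * omega k y"
  unfolding omega_def
  by (simp add: distrib_right sum.distrib distrib_left flip: exp_add)

lemma omega_cnj: "cnj (omega h y) = omega (-h) y"
  unfolding omega_def exp_cnj
  by (simp add: sum_negf)

lemma norm_omega [simp]: "norm (omega k y) = 1"
proof -
  have "omega k y = exp (\<i> * complex_of_real (2 * pi * (\<Sum>j\<in>UNIV. real_of_int (k $ j) * y $ j)))"
    unfolding omega_def by (simp add: mult_ac)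
  then show ?thesis by (simp only: norm_exp_i_times)
qed

lemma omega_zero [simp]: "omega 0 y = 1"
  unfolding omega_def by simp

lemma continuous_omega: "continuous_on S (omega k)"
  unfolding omega_def by (intro continuous_intros)

lemma rw_ge1: "rw \<beta> \<gamma> h \<ge> 1"
  unfolding rw_def by simp

lemma rvec_ge1: "rvec \<beta> \<gamma> k \<ge> 1"
  unfolding rvec_def by (intro prod_ge_1) (auto simp: rw_ge1)

lemma int_powr_ge1: "(n::int) \<noteq> 0 \<Longrightarrow> 0 \<le> p \<Longrightarrow> \<bar>real_of_int n\<bar> powr p \<ge> 1"
  by (rule ge_one_powr_ge_zero) auto

lemma rw_mono_exp:
  assumes "0 \<le> \<beta>" "\<beta> \<le> \<alpha>" "0 < \<gamma>"
  shows "rw \<beta> \<gamma> n \<le> rw \<alpha> \<gamma> n"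
proof (cases "n = 0")
  case True then show ?thesis by (simp add: rw_def)
next
  case False
  then have "\<bar>real_of_int n\<bar> \<ge> 1" by linarith
  then have "\<bar>real_of_int n\<bar> powr (2*\<beta>) \<le> \<bar>real_of_int n\<bar> powr (2*\<alpha>)"
    using assms by (intro powr_mono) auto
  then show ?thesis unfolding rw_def using assms
    by (intro max.mono divide_right_mono) auto
qed

lemma rw_shift:
  assumes g: "0 < \<gamma>" "\<gamma> \<le> 1" and b: "0 \<le> \<beta>"
  shows "rw \<beta> \<gamma> k \<le> max 1 (2 powr (2*\<beta>) * \<gamma>) * rw \<beta> \<gamma> (k + h) * rw \<beta> \<gamma> h"
proof -
  define m where "m = k + h"
  have km: "k = m - h" unfolding m_def by simp
  define A where "A = \<bar>real_of_int m\<bar> powr (2*\<beta>)"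
  define B where "B = \<bar>real_of_int h\<bar> powr (2*\<beta>)"
  define X where "X = \<bar>real_of_int k\<bar> powr (2*\<beta>)"
  define C where "C = max 1 (2 powr (2*\<beta>) * \<gamma>)"
  have C1: "C \<ge> 1" "C \<ge> 2 powr (2*\<beta>) * \<gamma>" unfolding C_def by auto
  have AB0: "A \<ge> 0" "B \<ge> 0" unfolding A_def B_def by auto
  have "\<bar>real_of_int k\<bar> \<le> 2 * max \<bar>real_of_int m\<bar> \<bar>real_of_int h\<bar>"
    unfolding km by simp
  then have "X \<le> (2 * max \<bar>real_of_int m\<bar> \<bar>real_of_int h\<bar>) powr (2*\<beta>)"
    unfolding X_def using b by (intro powr_mono2) auto
  also have "\<dots> = 2 powr (2*\<beta>) * max A B"
  proof -
    have "(2 * max \<bar>real_of_int m\<bar> \<bar>real_of_int h\<bar>) powr (2*\<beta>)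
        = 2 powr (2*\<beta>) * (max \<bar>real_of_int m\<bar> \<bar>real_of_int h\<bar>) powr (2*\<beta>)"
      by (simp add: powr_mult)
    moreover have "(max \<bar>real_of_int m\<bar> \<bar>real_of_int h\<bar>) powr (2*\<beta>) = max A B"
    proof (cases "\<bar>real_of_int m\<bar> \<le> \<bar>real_of_int h\<bar>")
      case True
      then have "A \<le> B" unfolding A_def B_def using b by (intro powr_mono2) auto
      then show ?thesis using True unfolding B_def by (simp add: max_def)
    next
      case False
      then have "B \<le> A" unfolding A_def B_def using b by (intro powr_mono2) auto
      then show ?thesis using False unfolding A_def by (simp add: max_def)
    qed
    ultimately show ?thesis by simp
  qed
  finally have X: "X \<le> 2 powr (2*\<beta>) * max A B" .
  have rm: "rw \<beta> \<gamma> m = max (A/\<gamma>) 1" and rh: "rw \<beta> \<gamma> h = max (B/\<gamma>) 1"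
    and rk: "rw \<beta> \<gamma> k = max (X/\<gamma>) 1"
    unfolding rw_def A_def B_def X_def by auto
  have R1: "max (A/\<gamma>) 1 \<ge> 1" "max (B/\<gamma>) 1 \<ge> 1" by auto
  have "X/\<gamma> \<le> C * max (A/\<gamma>) 1 * max (B/\<gamma>) 1"
  proof (cases "A \<ge> B")
    case True
    show ?thesis
    proof (cases "h = 0")
      case True
      then have "X = A" unfolding X_def A_def km by simp
      then have "X/\<gamma> \<le> 1 * max (A/\<gamma>) 1 * 1" by simp
      also have "\<dots> \<le> C * max (A/\<gamma>) 1 * max (B/\<gamma>) 1"
        using C1 R1 by (intro mult_mono) auto
      finally show ?thesis .
    next
      case False
      then have "B \<ge> 1" unfolding B_def using b by (intro int_powr_ge1) auto
      then have "max (B/\<gamma>) 1 \<ge> 1/\<gamma>" using g by (auto simp: divide_right_mono)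
      have "X/\<gamma> \<le> 2 powr (2*\<beta>) * A / \<gamma>" using X True g by (simp add: divide_right_mono max_def)
      also have "\<dots> = (2 powr (2*\<beta>) * \<gamma>) * (A/\<gamma>) * (1/\<gamma>)" using g by simp
      also have "\<dots> \<le> C * max (A/\<gamma>) 1 * max (B/\<gamma>) 1"
        using C1 R1 \<open>max (B/\<gamma>) 1 \<ge> 1/\<gamma>\<close> g AB0
        by (intro mult_mono) auto
      finally show ?thesis .
    qed
  next
    case False
    show ?thesis
    proof (cases "m = 0")
      case True
      then have "X = B" unfolding X_def B_def km by simp
      then have "X/\<gamma> \<le> 1 * 1 * max (B/\<gamma>) 1" by simp
      also have "\<dots> \<le> C * max (A/\<gamma>) 1 * max (B/\<gamma>) 1"
        using C1 R1 by (intro mult_mono) auto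
      finally show ?thesis .
    next
      case mF: False
      then have "A \<ge> 1" unfolding A_def using b by (intro int_powr_ge1) auto
      then have "max (A/\<gamma>) 1 \<ge> 1/\<gamma>" using g by (auto simp: divide_right_mono)
      have "X/\<gamma> \<le> 2 powr (2*\<beta>) * B / \<gamma>" using X False g by (simp add: divide_right_mono max_def)
      also have "\<dots> = (2 powr (2*\<beta>) * \<gamma>) * (1/\<gamma>) * (B/\<gamma>)" using g by simp
      also have "\<dots> \<le> C * max (A/\<gamma>) 1 * max (B/\<gamma>) 1"
        using C1 R1 \<open>max (A/\<gamma>) 1 \<ge> 1/\<gamma>\<close> g AB0
        by (intro mult_mono) auto
      finally show ?thesis .
    qed
  qed
  moreover have "1 \<le> C * max (A/\<gamma>) 1 * max (B/\<gamma>) 1"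
    using C1 R1 by (metis mult_mono' mult_1 order_trans zero_le_one)
  ultimately show ?thesis unfolding rk rm[unfolded m_def] rh C_def[symmetric] by simp
qed

lemma rw_ratio:
  assumes g: "0 < \<gamma>" "\<gamma> \<le> 1" and b: "0 \<le> \<beta>" "\<beta> \<le> \<alpha>" and n: "n \<noteq> 0"
  shows "rw \<beta> \<gamma> n = \<bar>real_of_int n\<bar> powr (2*\<beta> - 2*\<alpha>) * rw \<alpha> \<gamma> n"
proof -
  have p: "\<bar>real_of_int n\<bar> > 0" using n by auto
  have e: "rw t \<gamma> n = \<bar>real_of_int n\<bar> powr (2*t) / \<gamma>" if "t \<ge> 0" for t
  proof -
    have "\<bar>real_of_int n\<bar> powr (2*t) \<ge> 1" using n that by (intro int_powr_ge1) auto
    then show ?thesis unfolding rw_def using g by (simp add: le_divide_eq)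
  qed
  show ?thesis using e[of \<beta>] e[of \<alpha>] b p by (simp add: powr_diff)
qed

lemma rw_nonneg: "0 \<le> rw \<beta> \<gamma> h"
  using rw_ge1[of \<beta> \<gamma> h] by linarith

lemma cconst_sq: "(cconst \<alpha> \<gamma>)\<^sup>2 = (\<Prod>j\<in>UNIV. max 1 (2 powr (2 * \<alpha>) * \<gamma> $ j))"
  unfolding cconst_def by (rule real_sqrt_pow2) (auto intro: prod_nonneg)

lemma rvec_shift:
  fixes \<gamma> :: "real^'d::finite"
  assumes g: "\<forall>j. 0 < \<gamma>$j \<and> \<gamma>$j \<le> 1" and b: "0 \<le> \<beta>" "\<beta> \<le> \<alpha>"
  shows "rvec \<beta> \<gamma> k \<le> (cconst \<alpha> \<gamma>)\<^sup>2 * rvec \<beta> \<gamma> (k + h) * rvec \<beta> \<gamma> h"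
proof -
  have "rvec \<beta> \<gamma> k \<le> (\<Prod>j\<in>UNIV. max 1 (2 powr (2 * \<alpha>) * \<gamma> $ j) * rw \<beta> (\<gamma>$j) ((k+h)$j) * rw \<beta> (\<gamma>$j) (h$j))"
    unfolding rvec_def
  proof (intro prod_mono conjI)
    fix j
    show "0 \<le> rw \<beta> (\<gamma> $ j) (k $ j)" using rw_ge1[of \<beta>] by (meson order_trans zero_le_one)
    have "rw \<beta> (\<gamma> $ j) (k $ j) \<le> max 1 (2 powr (2*\<beta>) * \<gamma>$j) * rw \<beta> (\<gamma>$j) (k$j + h$j) * rw \<beta> (\<gamma>$j) (h$j)"
      using g b by (intro rw_shift) auto
    also have "\<dots> \<le> max 1 (2 powr (2*\<alpha>) * \<gamma>$j) * rw \<beta> (\<gamma>$j) (k$j + h$j) * rw \<beta> (\<gamma>$j) (h$j)"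
      using g b by (intro mult_right_mono max.mono) (auto simp: rw_nonneg less_imp_le)
    finally show "rw \<beta> (\<gamma> $ j) (k $ j) \<le> max 1 (2 powr (2 * \<alpha>) * \<gamma> $ j) * rw \<beta> (\<gamma> $ j) ((k + h) $ j) * rw \<beta> (\<gamma> $ j) (h $ j)"
      by simp
  qed
  also have "\<dots> = (cconst \<alpha> \<gamma>)\<^sup>2 * rvec \<beta> \<gamma> (k + h) * rvec \<beta> \<gamma> h"
    unfolding cconst_sq rvec_def by (simp add: prod.distrib)
  finally show ?thesis .
qed

lemma rvec_mono_exp:
  fixes \<gamma> :: "real^'d::finite"
  assumes g: "\<forall>j. 0 < \<gamma>$j" and b: "0 \<le> \<beta>" "\<beta> \<le> \<alpha>"
  shows "rvec \<beta> \<gamma> k \<le> rvec \<alpha> \<gamma> k"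
  unfolding rvec_def using g b rw_ge1[of \<beta>]
  by (intro prod_mono conjI rw_mono_exp) (auto intro: order_trans[OF zero_le_one])

lemma Rect_iff:
  fixes \<gamma> :: "real^'d::finite"
  shows "k \<in> Rect \<alpha> \<nu> \<gamma> \<longleftrightarrow> (\<forall>j. rw \<alpha> (\<gamma>$j) (k$j) \<le> \<nu>)"
  unfolding Rect_def by (subst Max_le_iff) auto

lemma not_Rect_rvec:
  fixes \<gamma> :: "real^'d::finite"
  assumes "k \<notin> Rect \<alpha> \<nu> \<gamma>"
  shows "rvec \<alpha> \<gamma> k > \<nu>"
proof -
  obtain j where j: "rw \<alpha> (\<gamma>$j) (k$j) > \<nu>" using assms unfolding Rect_iff by (auto simp: not_le)
  have "rvec \<alpha> \<gamma> k = rw \<alpha> (\<gamma>$j) (k$j) * (\<Prod>i\<in>UNIV-{j}. rw \<alpha> (\<gamma>$i) (k$i))"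
    unfolding rvec_def by (subst prod.remove[of _ j]) auto
  also have "\<dots> \<ge> rw \<alpha> (\<gamma>$j) (k$j) * 1"
    using rw_ge1[of \<alpha>] by (intro mult_left_mono prod_ge_1) (auto intro: order_trans[OF zero_le_one])
  finally show ?thesis using j by simp
qed

definition ibox :: "int set \<Rightarrow> (int^'d) set" where
  "ibox S = {k. \<forall>j. k$j \<in> S}"

lemma ibox_eq: "ibox S = vec_lambda ` PiE UNIV (\<lambda>_. S)"
proof -
  have "k \<in> vec_lambda ` PiE UNIV (\<lambda>_. S)" if "\<forall>j. k$j \<in> S" for k :: "int^'d"
    using that by (intro image_eqI[of _ _ "\<lambda>j. k$j"]) auto
  then show ?thesis unfolding ibox_def by auto
qed

lemma inj_vec_lambda: "inj_on vec_lambda A"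
  by (intro inj_onI) (metis vec_lambda_beta ext)

lemma finite_ibox: "finite S \<Longrightarrow> finite (ibox S :: (int^'d::finite) set)"
  unfolding ibox_eq by (intro finite_imageI finite_PiE) auto

lemma ibox_sum:
  assumes "finite S"
  shows "(\<Sum>k\<in>(ibox S :: (int^'d::finite) set). \<Prod>j\<in>UNIV. f j (k$j)) = (\<Prod>j\<in>UNIV. \<Sum>n\<in>S. (f j n :: real))"
proof -
  have "(\<Prod>j\<in>UNIV. \<Sum>n\<in>S. (f j n :: real)) = (\<Sum>g\<in>PiE UNIV (\<lambda>_. S). \<Prod>j\<in>UNIV. f j (g j))"
    using assms by (intro prod_sum_PiE) auto
  also have "\<dots> = (\<Sum>k\<in>(ibox S :: (int^'d::finite) set). \<Prod>j\<in>UNIV. f j (k$j))"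
    unfolding ibox_eq by (subst sum.reindex) (auto simp: inj_vec_lambda)
  finally show ?thesis by simp
qed

lemma Rect_sub_ibox:
  fixes \<gamma> :: "real^'d::finite"
  assumes g: "\<forall>j. 0 < \<gamma>$j \<and> \<gamma>$j \<le> 1" and a: "\<alpha> \<ge> 1/2"
  shows "Rect \<alpha> \<nu> \<gamma> \<subseteq> ibox {-\<lceil>\<nu>\<rceil>..\<lceil>\<nu>\<rceil>}"
proof
  fix k assume "k \<in> Rect \<alpha> \<nu> \<gamma>"
  then have r: "rw \<alpha> (\<gamma>$j) (k$j) \<le> \<nu>" for j unfolding Rect_iff by auto
  have "\<bar>k$j\<bar> \<le> \<lceil>\<nu>\<rceil>" for j
  proof (cases "k$j = 0")
    case True
    then show ?thesis using r[of j] rw_ge1[of \<alpha> "\<gamma>$j" "k$j"] by (simp; linarith)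
  next
    case False
    then have ge: "\<bar>real_of_int (k$j)\<bar> \<ge> 1" by linarith
    then have "\<bar>real_of_int (k$j)\<bar> = \<bar>real_of_int (k$j)\<bar> powr 1" by simp
    also have "\<dots> \<le> \<bar>real_of_int (k$j)\<bar> powr (2*\<alpha>)" using ge a by (intro powr_mono) auto
    also have "\<dots> \<le> \<bar>real_of_int (k$j)\<bar> powr (2*\<alpha>) / \<gamma>$j"
      using g[rule_format, of j] by (simp add: le_divide_eq mult_left_le)
    also have "\<dots> \<le> \<nu>" using r[of j] unfolding rw_def by simp
    finally have "real_of_int \<bar>k$j\<bar> \<le> \<nu>" by simp
    then show ?thesis by linarith
  qed
  then show "k \<in> ibox {-\<lceil>\<nu>\<rceil>..\<lceil>\<nu>\<rceil>}" unfolding ibox_def by (smt (verit) atLeastAtMost_iff mem_Collect_eq)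
qed

lemma finite_Rect:
  fixes \<gamma> :: "real^'d::finite"
  assumes g: "\<forall>j. 0 < \<gamma>$j \<and> \<gamma>$j \<le> 1" and a: "\<alpha> \<ge> 1/2"
  shows "finite (Rect \<alpha> \<nu> \<gamma>)"
  using finite_subset[OF Rect_sub_ibox[OF assms] finite_ibox] by auto

definition zf :: "real \<Rightarrow> int \<Rightarrow> real" where
  "zf s n = (if n = 0 then 1 else \<bar>real_of_int n\<bar> powr (-s))"

lemma zf_nonneg: "zf s n \<ge> 0" unfolding zf_def by auto

lemma zf_sum_interval: "(\<Sum>n\<in>{-int M..int M}. zf s n) = 1 + 2 * (\<Sum>i<M. 1 / real (Suc i) powr s)"
proof (induction M)
  case 0 then show ?case by (simp add: zf_def)
next
  case (Suc M)
  have e: "{-int (Suc M)..int (Suc M)} = insert (int (Suc M)) (insert (- int (Suc M)) {-int M..int M})"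
    by auto
  have "zf s (int (Suc M)) = 1 / real (Suc M) powr s" "zf s (- int (Suc M)) = 1 / real (Suc M) powr s"
    unfolding zf_def by (simp_all add: powr_minus_divide add.commute)
  then show ?case unfolding e using Suc by simp
qed

lemma summable_zeta: "s > 1 \<Longrightarrow> summable (\<lambda>n. 1 / real (Suc n) powr s)"
proof -
  assume s: "s > 1"
  have "summable (\<lambda>n. real n powr (-s))" using s by (subst summable_real_powr_iff) auto
  then have "summable (\<lambda>n. real (Suc n) powr (-s))" by (subst summable_Suc_iff)
  then show ?thesis by (simp add: powr_minus_divide)
qed

lemma zf_sum_le:
  assumes "finite S" "s > 1"
  shows "(\<Sum>n\<in>S. zf s n) \<le> 1 + 2 * rzeta s"
proof -
  define M where "M = nat (\<Sum>n\<in>S. \<bar>n\<bar>)"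
  have M: "S \<subseteq> {-int M..int M}"
  proof
    fix n assume "n \<in> S"
    then have "\<bar>n\<bar> \<le> (\<Sum>n\<in>S. \<bar>n\<bar>)" using assms(1) by (intro member_le_sum) auto
    then show "n \<in> {-int M..int M}" unfolding M_def by auto
  qed
  have "(\<Sum>n\<in>S. zf s n) \<le> (\<Sum>n\<in>{-int M..int M}. zf s n)"
    using M by (intro sum_mono2) (auto simp: zf_nonneg)
  also have "\<dots> = 1 + 2 * (\<Sum>i<M. 1 / real (Suc i) powr s)" by (rule zf_sum_interval)
  also have "\<dots> \<le> 1 + 2 * rzeta s"
    unfolding rzeta_def using summable_zeta[OF assms(2)]
    by (intro add_left_mono mult_left_mono sum_le_suminf) auto
  finally show ?thesis .
qed

lemma rw_zero: "rw \<beta> \<gamma> 0 = 1" unfolding rw_def by simp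

lemma rw_beta_le_zf:
  assumes g: "0 < \<gamma>" "\<gamma> \<le> 1" and b: "0 \<le> \<beta>" "\<beta> = \<alpha> - 1/2 - \<delta>" "\<delta> > 0" and r: "rw \<alpha> \<gamma> n \<le> \<nu>" and nu: "\<nu> \<ge> 1"
  shows "rw \<beta> \<gamma> n \<le> \<nu> * zf (1 + 2*\<delta>) n"
proof (cases "n = 0")
  case True then show ?thesis using nu by (simp add: rw_zero zf_def)
next
  case False
  have "rw \<beta> \<gamma> n = \<bar>real_of_int n\<bar> powr (2*\<beta> - 2*\<alpha>) * rw \<alpha> \<gamma> n"
    using g b False by (intro rw_ratio) auto
  also have "2*\<beta> - 2*\<alpha> = -(1 + 2*\<delta>)" using b by simp
  also have "\<bar>real_of_int n\<bar> powr (-(1 + 2*\<delta>)) * rw \<alpha> \<gamma> n \<le> \<bar>real_of_int n\<bar> powr (-(1 + 2*\<delta>)) * \<nu>"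
    using r by (intro mult_left_mono) auto
  finally show ?thesis using False by (simp add: zf_def mult.commute)
qed

lemma Rect_rvec_sum:
  fixes \<gamma> :: "real^'d::finite"
  assumes g: "\<forall>j. 0 < \<gamma>$j \<and> \<gamma>$j \<le> 1" and a: "\<alpha> \<ge> 1/2" and d: "\<delta> > 0"
    and b: "0 \<le> \<beta>" "\<beta> = \<alpha> - 1/2 - \<delta>" and nu: "\<nu> \<ge> 1"
  shows "(\<Sum>h\<in>Rect \<alpha> \<nu> \<gamma>. rvec \<beta> \<gamma> h) \<le> (\<nu> * (1 + 2 * rzeta (1 + 2*\<delta>))) ^ CARD('d)"
proof -
  define S where "S = {-\<lceil>\<nu>\<rceil>..\<lceil>\<nu>\<rceil>}"
  have fS: "finite S" unfolding S_def by simp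
  have sub: "Rect \<alpha> \<nu> \<gamma> \<subseteq> (ibox S :: (int^'d) set)" unfolding S_def using g a by (rule Rect_sub_ibox)
  have "(\<Sum>h\<in>Rect \<alpha> \<nu> \<gamma>. rvec \<beta> \<gamma> h) \<le> (\<Sum>h\<in>Rect \<alpha> \<nu> \<gamma>. \<Prod>j\<in>UNIV. \<nu> * zf (1 + 2*\<delta>) (h$j))"
    unfolding rvec_def
  proof (intro sum_mono prod_mono conjI)
    fix h j assume "h \<in> Rect \<alpha> \<nu> \<gamma>"
    then have "rw \<alpha> (\<gamma>$j) (h$j) \<le> \<nu>" unfolding Rect_iff by auto
    then show "rw \<beta> (\<gamma>$j) (h$j) \<le> \<nu> * zf (1 + 2*\<delta>) (h$j)"
      using g b nu d by (intro rw_beta_le_zf) auto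
  qed (simp add: rw_nonneg)
  also have "\<dots> \<le> (\<Sum>h\<in>(ibox S :: (int^'d) set). \<Prod>j\<in>UNIV. \<nu> * zf (1 + 2*\<delta>) (h$j))"
    using nu by (intro sum_mono2[OF finite_ibox[OF fS] sub]) (auto intro!: prod_nonneg simp: zf_nonneg)
  also have "\<dots> = (\<Prod>j\<in>(UNIV::'d set). \<Sum>n\<in>S. \<nu> * zf (1 + 2*\<delta>) n)"
    using fS by (rule ibox_sum)
  also have "\<dots> \<le> (\<Prod>j\<in>(UNIV::'d set). \<nu> * (1 + 2 * rzeta (1 + 2*\<delta>)))"
  proof (intro prod_mono conjI)
    show "0 \<le> (\<Sum>n\<in>S. \<nu> * zf (1 + 2*\<delta>) n)" for j using nu by (intro sum_nonneg) (auto simp: zf_nonneg)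
    show "(\<Sum>n\<in>S. \<nu> * zf (1 + 2*\<delta>) n) \<le> \<nu> * (1 + 2 * rzeta (1 + 2*\<delta>))" for j
      unfolding sum_distrib_left[symmetric] using nu fS d
      by (intro mult_left_mono zf_sum_le) auto
  qed
  finally show ?thesis by simp
qed

lemma cube_sets: "unit_cube \<in> sets lebesgue"
  unfolding unit_cube_def by simp

lemma integrable_mult_bounded:
  fixes G :: "real^'d::finite \<Rightarrow> complex"
  assumes G: "integrable (lebesgue_on unit_cube) G" and h: "continuous_on UNIV h"
    and B: "\<And>y. norm (h y) \<le> B"
  shows "integrable (lebesgue_on unit_cube) (\<lambda>y. G y * h y)"
proof (rule Bochner_Integration.integrable_bound)
  show "integrable (lebesgue_on unit_cube) (\<lambda>y. complex_of_real B * G y)"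
    using G by (rule integrable_mult_right)
  have "h \<in> borel_measurable (lebesgue_on unit_cube)"
    using h by (intro continuous_imp_measurable_on_sets_lebesgue cube_sets) (auto intro: continuous_on_subset)
  then show "(\<lambda>y. G y * h y) \<in> borel_measurable (lebesgue_on unit_cube)"
    using G by measurable
  have "B \<ge> 0" using B[of undefined] norm_ge_zero[of "h undefined"] by linarith
  show "AE y in lebesgue_on unit_cube. norm (G y * h y) \<le> norm (complex_of_real B * G y)"
  proof (intro AE_I2)
    fix y
    have "norm (G y) * norm (h y) \<le> norm (G y) * B" using B[of y] by (intro mult_left_mono) auto
    then show "norm (G y * h y) \<le> norm (complex_of_real B * G y)"
      using \<open>B \<ge> 0\<close> by (simp add: norm_mult mult.commute)
  qed
qed

lemma integrable_omega_mult:
  fixes G :: "real^'d::finite \<Rightarrow> complex"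
  assumes G: "integrable (lebesgue_on unit_cube) G"
  shows "integrable (lebesgue_on unit_cube) (\<lambda>y. G y * cnj (omega k y))"
  using G by (rule integrable_mult_bounded[where B=1]) (auto simp: omega_cnj intro: continuous_omega)

lemma fourier_coeff_mult_phiK:
  fixes G :: "real^'d::finite \<Rightarrow> complex"
  assumes G: "integrable (lebesgue_on unit_cube) G"
  shows "fourier_coeff (\<lambda>y. G y * phiK K N c x y) k
         = (\<Sum>h\<in>K. phi_check N c x h * fourier_coeff G (k + h))"
proof -
  have eq: "G y * phiK K N c x y * cnj (omega k y) = (\<Sum>h\<in>K. phi_check N c x h * (G y * cnj (omega (k + h) y)))" for y
    unfolding phiK_def sum_distrib_left sum_distrib_right
    by (intro sum.cong refl) (simp add: omega_add mult_ac)
  show ?thesis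
    unfolding fourier_coeff_def cube_integral_def eq
    by (subst Bochner_Integration.integral_sum) (auto intro: integrable_mult_right integrable_omega_mult[OF G])
qed

lemma cube_integral_mult_phiK:
  fixes G :: "real^'d::finite \<Rightarrow> complex"
  assumes G: "integrable (lebesgue_on unit_cube) G"
  shows "cube_integral (\<lambda>y. G y * phiK K N c x y)
         = (\<Sum>h\<in>K. phi_check N c x h * fourier_coeff G h)"
  using fourier_coeff_mult_phiK[OF G, of K N c x 0]
  by (simp add: fourier_coeff_def)

lemma norm_phi_check: "norm (phi_check N c x k) \<le> mubar N c"
proof -
  have "norm (\<Sum>n=1..N. complex_of_real (c n) * omega k (x n)) \<le> (\<Sum>n=1..N. \<bar>c n\<bar>)"
    by (rule order_trans[OF norm_sum]) (simp add: norm_mult)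
  then show ?thesis
    unfolding phi_check_def mubar_def norm_mult
    by (simp add: divide_right_mono norm_divide)
qed

lemma infsum_finite_sum:
  fixes f :: "'i \<Rightarrow> 'a \<Rightarrow> 'b::{topological_comm_monoid_add, t2_space}"
  assumes "finite I" "\<And>i. i \<in> I \<Longrightarrow> f i summable_on A"
  shows "(\<lambda>x. \<Sum>i\<in>I. f i x) summable_on A \<and> (\<Sum>\<^sub>\<infinity>x\<in>A. \<Sum>i\<in>I. f i x) = (\<Sum>i\<in>I. \<Sum>\<^sub>\<infinity>x\<in>A. f i x)"
  using assms
proof (induction I rule: finite_induct)
  case empty then show ?case by simp
next
  case (insert j I)
  then have s: "f j summable_on A" "(\<lambda>x. \<Sum>i\<in>I. f i x) summable_on A" by auto
  show ?case using insert s by (simp add: summable_on_add infsum_add)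
qed

lemma A_summable_norm:
  assumes "in_A \<alpha> \<gamma> G"
  shows "(\<lambda>k. norm (fourier_coeff G k)) summable_on UNIV"
proof (rule summable_on_comparison_test)
  show "(\<lambda>k. sqrt (rvec \<alpha> \<gamma> k) * norm (fourier_coeff G k)) summable_on UNIV"
    using assms unfolding in_A_def by auto
  show "norm (fourier_coeff G k) \<le> sqrt (rvec \<alpha> \<gamma> k) * norm (fourier_coeff G k)" for k
  proof -
    have "1 \<le> sqrt (rvec \<alpha> \<gamma> k)" using rvec_ge1[of \<alpha> \<gamma> k] by simp
    from mult_right_mono[OF this norm_ge_zero] show ?thesis by simp
  qed
qed auto

lemma err1_bound:
  fixes g :: "real^'d::finite \<Rightarrow> real" and \<gamma> :: "real^'d"
  assumes inA: "in_A \<alpha> \<gamma> (\<lambda>y. complex_of_real (g y))"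
    and xs: "\<forall>n\<in>{1..N}. x n \<in> unit_cube"
    and K: "finite K" "\<And>k. k \<notin> K \<Longrightarrow> rvec \<alpha> \<gamma> k > \<nu>" and nu: "\<nu> > 0"
  shows "err1 g K N c x \<le> A_norm \<alpha> \<gamma> (\<lambda>y. complex_of_real (g y)) * (1 / sqrt \<nu>) * mubar N c"
proof -
  define G where "G = (\<lambda>y. complex_of_real (g y))"
  define a where "a = fourier_coeff G"
  define ph where "ph = phi_check N c x"
  define w where "w = (\<lambda>k. sqrt (rvec \<alpha> \<gamma> k) * norm (a k))"
  define mu where "mu = mubar N c"
  have mu0: "mu \<ge> 0" unfolding mu_def mubar_def by (auto intro: sum_nonneg)
  have phb: "norm (ph k) \<le> mu" for k unfolding ph_def mu_def by (rule norm_phi_check)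
  have inA': "in_A \<alpha> \<gamma> G" using inA unfolding G_def .
  have Gint: "integrable (lebesgue_on unit_cube) G" using inA' unfolding in_A_def by auto
  have wsum: "w summable_on UNIV" using inA' unfolding in_A_def w_def a_def by auto
  have anorm: "(\<lambda>k. norm (a k)) summable_on UNIV" unfolding a_def using inA' by (rule A_summable_norm)
  have rep: "G y = (\<Sum>\<^sub>\<infinity>k. a k * omega k y)" if "y \<in> unit_cube" for y
    using inA' that unfolding in_A_def a_def by auto
  have sum_aw: "(\<lambda>k. a k * omega k y) summable_on UNIV" for y
    by (rule abs_summable_summable) (simp add: norm_mult anorm)
  have L1: "(1 / of_nat N) * (\<Sum>n=1..N. complex_of_real (c n * g (x n))) = (\<Sum>\<^sub>\<infinity>k. a k * ph k)"
  proof -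
    have "(\<Sum>n=1..N. complex_of_real (c n * g (x n))) = (\<Sum>n=1..N. complex_of_real (c n) * (\<Sum>\<^sub>\<infinity>k. a k * omega k (x n)))"
      using xs by (intro sum.cong refl) (auto simp: rep[symmetric] G_def)
    also have "\<dots> = (\<Sum>n=1..N. \<Sum>\<^sub>\<infinity>k. complex_of_real (c n) * (a k * omega k (x n)))"
      by (simp add: infsum_cmult_right')
    also have "\<dots> = (\<Sum>\<^sub>\<infinity>k. \<Sum>n=1..N. complex_of_real (c n) * (a k * omega k (x n)))"
      by (rule infsum_finite_sum[THEN conjunct2, symmetric]) (auto intro: summable_on_cmult_right sum_aw)
    finally have "(1 / of_nat N) * (\<Sum>n=1..N. complex_of_real (c n * g (x n)))
        = (1 / of_nat N) * (\<Sum>\<^sub>\<infinity>k. \<Sum>n=1..N. complex_of_real (c n) * (a k * omega k (x n)))"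
      by (rule arg_cong)
    also have "\<dots> = (\<Sum>\<^sub>\<infinity>k. (1 / of_nat N) * (\<Sum>n=1..N. complex_of_real (c n) * (a k * omega k (x n))))"
      by (rule infsum_cmult_right'[symmetric])
    also have "\<dots> = (\<Sum>\<^sub>\<infinity>k. a k * ph k)"
      unfolding ph_def phi_check_def
      by (intro infsum_cong) (simp add: sum_distrib_left mult_ac)
    finally show ?thesis .
  qed
  have L2: "cube_integral (\<lambda>y. of_real (g y) * phiK K N c x y) = (\<Sum>k\<in>K. a k * ph k)"
    using cube_integral_mult_phiK[OF Gint, of K N c x] unfolding G_def a_def ph_def
    by (simp add: mult.commute)
  define f where "f = (\<lambda>k. a k * ph k)"
  have fabs: "(\<lambda>k. norm (f k)) summable_on A" for A
  proof (rule summable_on_subset[OF _ subset_UNIV], rule summable_on_comparison_test)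
    show "(\<lambda>k. norm (a k) * mu) summable_on UNIV" using anorm by (rule summable_on_cmult_left)
    show "norm (f k) \<le> norm (a k) * mu" for k unfolding f_def norm_mult using phb by (intro mult_left_mono) auto
  qed auto
  have fs: "f summable_on A" for A by (rule abs_summable_summable) (rule fabs)
  have split: "(\<Sum>\<^sub>\<infinity>k. f k) = (\<Sum>k\<in>K. f k) + (\<Sum>\<^sub>\<infinity>k\<in>-K. f k)"
  proof -
    have "(\<Sum>\<^sub>\<infinity>k. f k) = (\<Sum>\<^sub>\<infinity>k\<in>K \<union> -K. f k)" by simp
    also have "\<dots> = (\<Sum>\<^sub>\<infinity>k\<in>K. f k) + (\<Sum>\<^sub>\<infinity>k\<in>-K. f k)" by (rule infsum_Un_disjoint) (auto intro: fs)
    finally show ?thesis using K(1) by simp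
  qed
  have "err1 g K N c x = norm (\<Sum>\<^sub>\<infinity>k\<in>-K. f k)"
    unfolding err1_def L1 L2 using split unfolding f_def by simp
  also have "\<dots> \<le> (\<Sum>\<^sub>\<infinity>k\<in>-K. norm (f k))" by (rule norm_infsum_bound) (rule fabs)
  also have "\<dots> \<le> (\<Sum>\<^sub>\<infinity>k\<in>-K. w k * (mu / sqrt \<nu>))"
  proof (rule infsum_mono)
    show "(\<lambda>k. w k * (mu / sqrt \<nu>)) summable_on -K"
      by (rule summable_on_subset[OF _ subset_UNIV]) (intro summable_on_cmult_left wsum)
    fix k assume "k \<in> -K"
    then have "rvec \<alpha> \<gamma> k > \<nu>" using K(2) by auto
    then have sq: "sqrt \<nu> \<le> sqrt (rvec \<alpha> \<gamma> k)" by simp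
    have snu: "sqrt \<nu> > 0" using nu by simp
    have "norm (f k) \<le> norm (a k) * mu" unfolding f_def norm_mult using phb by (intro mult_left_mono) auto
    also have "\<dots> = (sqrt \<nu> * norm (a k)) * (mu / sqrt \<nu>)" using snu by simp
    also have "\<dots> \<le> w k * (mu / sqrt \<nu>)" unfolding w_def
      using sq mu0 snu by (intro mult_right_mono mult_right_mono) auto
    finally show "norm (f k) \<le> w k * (mu / sqrt \<nu>)" .
  qed (rule fabs)
  also have "\<dots> \<le> (\<Sum>\<^sub>\<infinity>k. w k * (mu / sqrt \<nu>))"
  proof (rule infsum_mono_neutral)
    show "(\<lambda>k. w k * (mu / sqrt \<nu>)) summable_on -K"
      by (rule summable_on_subset[OF _ subset_UNIV]) (intro summable_on_cmult_left wsum)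
    show "(\<lambda>k. w k * (mu / sqrt \<nu>)) summable_on UNIV"
      by (intro summable_on_cmult_left wsum)
    show "0 \<le> w k * (mu / sqrt \<nu>)" for k
      unfolding w_def using mu0 nu rvec_ge1[of \<alpha> \<gamma> k] by (intro mult_nonneg_nonneg) auto
  qed auto
  also have "\<dots> = A_norm \<alpha> \<gamma> G * (1 / sqrt \<nu>) * mu"
    unfolding A_norm_def w_def a_def by (subst infsum_cmult_left') simp
  finally show ?thesis unfolding G_def mu_def .
qed

lemma shift_bij: "bij_betw (\<lambda>k. k + h) UNIV (UNIV :: (int^'d::finite) set)"
  by (rule bij_betwI[where g="\<lambda>k. k - h"]) auto

lemma infsum_shift:
  "(\<Sum>\<^sub>\<infinity>k::int^'d::finite. f (k + h)) = (\<Sum>\<^sub>\<infinity>k. f k)"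
  using infsum_reindex_bij_betw[OF shift_bij[of h], of f] by simp

lemma summable_shift:
  "(\<lambda>k::int^'d::finite. f (k + h)) summable_on UNIV \<longleftrightarrow> f summable_on UNIV"
  using summable_on_reindex_bij_betw[OF shift_bij[of h], of f] by simp

lemma Hnorm_bound:
  fixes a ph :: "int^'d::finite \<Rightarrow> complex" and \<gamma> :: "real^'d"
  assumes g: "\<forall>j. 0 < \<gamma>$j \<and> \<gamma>$j \<le> 1" and be: "0 \<le> \<beta>" "\<beta> \<le> \<alpha>" and K: "finite K"
    and wsum: "(\<lambda>k. sqrt (rvec \<alpha> \<gamma> k) * norm (a k)) summable_on UNIV"
    and phb: "\<And>h. norm (ph h) \<le> mu" and mu0: "mu \<ge> 0"
  shows "(\<lambda>k. rvec \<beta> \<gamma> k * (norm (\<Sum>h\<in>K. ph h * a (k + h)))\<^sup>2) summable_on UNIV \<and>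
         (\<Sum>\<^sub>\<infinity>k. rvec \<beta> \<gamma> k * (norm (\<Sum>h\<in>K. ph h * a (k + h)))\<^sup>2)
           \<le> mu\<^sup>2 * (cconst \<alpha> \<gamma>)\<^sup>2 * (\<Sum>\<^sub>\<infinity>k. sqrt (rvec \<alpha> \<gamma> k) * norm (a k))\<^sup>2 * (\<Sum>h\<in>K. rvec \<beta> \<gamma> h)"
proof -
  define B where "B = (\<lambda>m. sqrt (rvec \<beta> \<gamma> m) * norm (a m))"
  define w where "w = (\<lambda>k. sqrt (rvec \<alpha> \<gamma> k) * norm (a k))"
  define T where "T = (\<Sum>\<^sub>\<infinity>m. B m)"
  define cc where "cc = cconst \<alpha> \<gamma>"
  define Q where "Q = (\<lambda>k. rvec \<beta> \<gamma> k * (norm (\<Sum>h\<in>K. ph h * a (k + h)))\<^sup>2)"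
  define R where "R = (\<lambda>k. mu\<^sup>2 * cc\<^sup>2 * T * (\<Sum>h\<in>K. rvec \<beta> \<gamma> h * B (k + h)))"
  have cc0: "cc \<ge> 0" unfolding cc_def cconst_def by (auto intro!: prod_nonneg)
  have rb0: "rvec \<beta> \<gamma> k \<ge> 0" for k using rvec_ge1[of \<beta> \<gamma> k] by simp
  have B0: "B m \<ge> 0" for m unfolding B_def using rb0[of m] by simp
  have Bw: "B m \<le> w m" for m unfolding B_def w_def
    using rvec_mono_exp[of \<gamma> \<beta> \<alpha> m] g be by (intro mult_right_mono) auto
  have Bsum: "B summable_on UNIV"
    using wsum B0 Bw unfolding w_def by (intro summable_on_comparison_test[OF wsum]) (auto simp: w_def)
  have T0: "T \<ge> 0" unfolding T_def using B0 by (intro infsum_nonneg) auto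
  have TA: "T \<le> (\<Sum>\<^sub>\<infinity>k. w k)" unfolding T_def using Bsum wsum Bw by (intro infsum_mono) (auto simp: w_def)
  have Bsh: "(\<lambda>k. B (k + h)) summable_on UNIV" for h using Bsum by (simp add: summable_shift)
  have sumB: "(\<Sum>h\<in>K. B (k + h)) \<le> T" for k
  proof -
    have "(\<Sum>h\<in>K. B (k + h)) = sum B ((\<lambda>h. k + h) ` K)"
      by (subst sum.reindex) (auto simp: inj_on_def)
    also have "\<dots> \<le> T" unfolding T_def using K B0 Bsum by (intro finite_sum_le_infsum) auto
    finally show ?thesis .
  qed
  have QR: "Q k \<le> R k" for k
  proof -
    have "sqrt (rvec \<beta> \<gamma> k) * norm (\<Sum>h\<in>K. ph h * a (k + h))
        \<le> sqrt (rvec \<beta> \<gamma> k) * (\<Sum>h\<in>K. mu * norm (a (k + h)))"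
    proof (intro mult_left_mono)
      show "norm (\<Sum>h\<in>K. ph h * a (k + h)) \<le> (\<Sum>h\<in>K. mu * norm (a (k + h)))"
        by (rule order_trans[OF norm_sum sum_mono]) (auto simp: norm_mult phb intro: mult_right_mono)
    qed (simp add: rb0)
    also have "\<dots> = mu * (\<Sum>h\<in>K. sqrt (rvec \<beta> \<gamma> k) * norm (a (k + h)))"
      by (simp add: sum_distrib_left mult_ac)
    also have "\<dots> \<le> mu * (\<Sum>h\<in>K. cc * (sqrt (rvec \<beta> \<gamma> h) * B (k + h)))"
    proof (intro mult_left_mono sum_mono mu0)
      fix h
      have "rvec \<beta> \<gamma> k \<le> cc\<^sup>2 * rvec \<beta> \<gamma> (k + h) * rvec \<beta> \<gamma> h"
        unfolding cc_def using g be by (rule rvec_shift)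
      then have "sqrt (rvec \<beta> \<gamma> k) \<le> sqrt (cc\<^sup>2 * rvec \<beta> \<gamma> (k + h) * rvec \<beta> \<gamma> h)" by simp
      also have "\<dots> = cc * sqrt (rvec \<beta> \<gamma> (k + h)) * sqrt (rvec \<beta> \<gamma> h)"
        using cc0 by (simp add: real_sqrt_mult)
      finally have "sqrt (rvec \<beta> \<gamma> k) * norm (a (k + h)) \<le> cc * sqrt (rvec \<beta> \<gamma> (k + h)) * sqrt (rvec \<beta> \<gamma> h) * norm (a (k + h))"
        by (intro mult_right_mono) auto
      then show "sqrt (rvec \<beta> \<gamma> k) * norm (a (k + h)) \<le> cc * (sqrt (rvec \<beta> \<gamma> h) * B (k + h))"
        unfolding B_def by (simp add: mult_ac)
    qed
    also have "\<dots> = mu * cc * (\<Sum>h\<in>K. sqrt (rvec \<beta> \<gamma> h) * B (k + h))"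
      by (simp add: sum_distrib_left mult_ac)
    finally have ineq: "sqrt (rvec \<beta> \<gamma> k) * norm (\<Sum>h\<in>K. ph h * a (k + h))
        \<le> mu * cc * (\<Sum>h\<in>K. sqrt (rvec \<beta> \<gamma> h) * B (k + h))" .
    have "Q k = (sqrt (rvec \<beta> \<gamma> k) * norm (\<Sum>h\<in>K. ph h * a (k + h)))\<^sup>2"
      unfolding Q_def using rb0[of k] by (simp add: power_mult_distrib)
    also have "\<dots> \<le> (mu * cc * (\<Sum>h\<in>K. sqrt (rvec \<beta> \<gamma> h) * B (k + h)))\<^sup>2"
      using ineq rb0[of k] by (intro power_mono) auto
    also have "\<dots> = mu\<^sup>2 * cc\<^sup>2 * (\<Sum>h\<in>K. (sqrt (rvec \<beta> \<gamma> h) * sqrt (B (k + h))) * sqrt (B (k + h)))\<^sup>2"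
      using B0 by (simp add: power_mult_distrib mult.assoc)
    also have "\<dots> \<le> mu\<^sup>2 * cc\<^sup>2 * ((\<Sum>h\<in>K. (sqrt (rvec \<beta> \<gamma> h) * sqrt (B (k + h)))\<^sup>2) * (\<Sum>h\<in>K. (sqrt (B (k + h)))\<^sup>2))"
      by (intro mult_left_mono Cauchy_Schwarz_ineq_sum) auto
    also have "\<dots> = mu\<^sup>2 * cc\<^sup>2 * ((\<Sum>h\<in>K. rvec \<beta> \<gamma> h * B (k + h)) * (\<Sum>h\<in>K. B (k + h)))"
      using B0 rb0 by (simp add: power_mult_distrib)
    also have "\<dots> \<le> mu\<^sup>2 * cc\<^sup>2 * ((\<Sum>h\<in>K. rvec \<beta> \<gamma> h * B (k + h)) * T)"
      using sumB[of k] B0 rb0 by (intro mult_left_mono sum_nonneg) (auto intro: mult_nonneg_nonneg)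
    also have "\<dots> = R k" unfolding R_def by (simp add: mult_ac)
    finally show ?thesis .
  qed
  have Rsum: "R summable_on UNIV \<and> (\<Sum>\<^sub>\<infinity>k. R k) = mu\<^sup>2 * cc\<^sup>2 * T * (\<Sum>h\<in>K. rvec \<beta> \<gamma> h * T)"
  proof -
    have s: "(\<lambda>k. \<Sum>h\<in>K. rvec \<beta> \<gamma> h * B (k + h)) summable_on UNIV \<and>
      (\<Sum>\<^sub>\<infinity>k. \<Sum>h\<in>K. rvec \<beta> \<gamma> h * B (k + h)) = (\<Sum>h\<in>K. \<Sum>\<^sub>\<infinity>k. rvec \<beta> \<gamma> h * B (k + h))"
      using K by (intro infsum_finite_sum) (auto intro: summable_on_cmult_right Bsh)
    have sh: "(\<Sum>\<^sub>\<infinity>k. B (k + h)) = T" for h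
      unfolding T_def by (rule infsum_shift)
    show ?thesis using s unfolding R_def
      by (simp add: summable_on_cmult_right infsum_cmult_right' sh)
  qed
  have Q0: "Q k \<ge> 0" for k unfolding Q_def using rb0[of k] by simp
  have Qs: "Q summable_on UNIV"
    by (rule summable_on_comparison_test[of R]) (use Rsum QR Q0 in blast)+
  have "(\<Sum>\<^sub>\<infinity>k. Q k) \<le> (\<Sum>\<^sub>\<infinity>k. R k)"
    by (rule infsum_mono[OF Qs conjunct1[OF Rsum] QR])
  also have "\<dots> = mu\<^sup>2 * cc\<^sup>2 * T\<^sup>2 * (\<Sum>h\<in>K. rvec \<beta> \<gamma> h)"
    using Rsum by (simp add: sum_distrib_left sum_distrib_right power2_eq_square mult_ac)
  also have "\<dots> \<le> mu\<^sup>2 * cc\<^sup>2 * (\<Sum>\<^sub>\<infinity>k. w k)\<^sup>2 * (\<Sum>h\<in>K. rvec \<beta> \<gamma> h)"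
    using TA T0 rb0 by (intro mult_right_mono mult_left_mono power_mono sum_nonneg) auto
  finally show ?thesis using Qs unfolding Q_def w_def cc_def by simp
qed

lemma F_rep:
  fixes G :: "real^'d::finite \<Rightarrow> complex"
  assumes inA: "in_A \<alpha> \<gamma> G" and y: "y \<in> unit_cube"
  shows "G y * phiK K N c x y
    = (\<Sum>\<^sub>\<infinity>k. (\<Sum>h\<in>K. phi_check N c x h * fourier_coeff G (k + h)) * omega k y)"
proof (cases "finite K")
  case False
  then show ?thesis unfolding phiK_def by simp
next
  case K: True
  define a where "a = fourier_coeff G"
  define ph where "ph = phi_check N c x"
  have anorm: "(\<lambda>k. norm (a k)) summable_on UNIV" unfolding a_def using inA by (rule A_summable_norm)
  have rep: "G y = (\<Sum>\<^sub>\<infinity>k. a k * omega k y)"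
    using inA y unfolding in_A_def a_def by auto
  have sh: "(\<lambda>k. a (k + h) * omega k y) summable_on UNIV" for h
  proof (rule abs_summable_summable)
    show "(\<lambda>k. norm (a (k + h) * omega k y)) summable_on UNIV"
      using anorm by (simp add: norm_mult summable_shift[of "\<lambda>k. norm (a k)"])
  qed
  have inner: "(\<Sum>\<^sub>\<infinity>m. a m * omega m y) * omega (-h) y = (\<Sum>\<^sub>\<infinity>k. a (k + h) * omega k y)" for h
  proof -
    have "(\<Sum>\<^sub>\<infinity>m. a m * omega m y) * omega (-h) y = (\<Sum>\<^sub>\<infinity>m. a m * omega (m - h) y)"
      by (subst infsum_cmult_left'[symmetric]) (simp add: omega_add[of _ "-h", symmetric] mult.assoc)
    also have "\<dots> = (\<Sum>\<^sub>\<infinity>k. a (k + h) * omega (k + h - h) y)"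
      by (rule infsum_shift[of "\<lambda>m. a m * omega (m - h) y" h, symmetric])
    finally show ?thesis by simp
  qed
  have "G y * phiK K N c x y = (\<Sum>h\<in>K. ph h * ((\<Sum>\<^sub>\<infinity>m. a m * omega m y) * omega (-h) y))"
    unfolding phiK_def rep ph_def omega_cnj sum_distrib_left by (simp add: mult_ac)
  also have "\<dots> = (\<Sum>h\<in>K. \<Sum>\<^sub>\<infinity>k. ph h * (a (k + h) * omega k y))"
    unfolding inner by (simp add: infsum_cmult_right')
  also have "\<dots> = (\<Sum>\<^sub>\<infinity>k. \<Sum>h\<in>K. ph h * (a (k + h) * omega k y))"
    using K by (intro infsum_finite_sum[THEN conjunct2, symmetric]) (auto intro: summable_on_cmult_right sh)
  also have "\<dots> = (\<Sum>\<^sub>\<infinity>k. (\<Sum>h\<in>K. ph h * a (k + h)) * omega k y)"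
    by (intro infsum_cong) (simp add: sum_distrib_right mult.assoc)
  finally show ?thesis unfolding a_def ph_def .
qed

lemma G_bounded:
  fixes G :: "real^'d::finite \<Rightarrow> complex"
  assumes inA: "in_A \<alpha> \<gamma> G" and y: "y \<in> unit_cube"
  shows "norm (G y) \<le> (\<Sum>\<^sub>\<infinity>k. norm (fourier_coeff G k))"
proof -
  have anorm: "(\<lambda>k. norm (fourier_coeff G k)) summable_on UNIV" using inA by (rule A_summable_norm)
  have "G y = (\<Sum>\<^sub>\<infinity>k. fourier_coeff G k * omega k y)"
    using inA y unfolding in_A_def by auto
  also have "norm \<dots> \<le> (\<Sum>\<^sub>\<infinity>k. norm (fourier_coeff G k * omega k y))"
    by (rule norm_infsum_bound) (simp add: norm_mult anorm)
  finally show ?thesis by (simp add: norm_mult)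
qed

lemma phiK_bounded: "norm (phiK K N c x y) \<le> real (card K) * mubar N c"
proof -
  have "norm (phiK K N c x y) \<le> (\<Sum>h\<in>K. mubar N c)"
    unfolding phiK_def
    by (rule order_trans[OF norm_sum sum_mono]) (simp add: norm_mult norm_phi_check omega_cnj)
  then show ?thesis by simp
qed

lemma continuous_phiK: "continuous_on S (phiK K N c x)"
  unfolding phiK_def omega_cnj by (intro continuous_intros continuous_on_sum continuous_omega)

lemma in_H_scale:
  fixes F :: "real^'d::finite \<Rightarrow> complex" and b :: "int^'d \<Rightarrow> complex"
  assumes meas: "F \<in> borel_measurable (lebesgue_on unit_cube)"
    and bnd: "\<And>y. y \<in> unit_cube \<Longrightarrow> norm (F y) \<le> M"
    and coef: "\<And>k. fourier_coeff F k = b k"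
    and sums: "(\<lambda>k. rvec \<beta> \<gamma> k * (norm (b k))\<^sup>2) summable_on UNIV"
    and rep: "\<And>y. y \<in> unit_cube \<Longrightarrow> F y = (\<Sum>\<^sub>\<infinity>k. b k * omega k y)"
    and r: "r > 0"
  shows "in_H \<beta> \<gamma> (\<lambda>y. F y / complex_of_real r) \<and>
         H_norm_sq \<beta> \<gamma> (\<lambda>y. F y / complex_of_real r) = (\<Sum>\<^sub>\<infinity>k. rvec \<beta> \<gamma> k * (norm (b k))\<^sup>2) / r\<^sup>2"
proof -
  define F' where "F' = (\<lambda>y. F y / complex_of_real r)"
  have coef': "fourier_coeff F' k = b k / complex_of_real r" for k
  proof -
    have "fourier_coeff F' k = cube_integral (\<lambda>y. F y * cnj (omega k y) / complex_of_real r)"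
      unfolding fourier_coeff_def F'_def by (simp add: mult_ac)
    also have "\<dots> = fourier_coeff F k / complex_of_real r"
      unfolding cube_integral_def fourier_coeff_def by simp
    finally show ?thesis using coef by simp
  qed
  have eqn: "rvec \<beta> \<gamma> k * (norm (fourier_coeff F' k))\<^sup>2 = rvec \<beta> \<gamma> k * (norm (b k))\<^sup>2 / r\<^sup>2" for k
    unfolding coef' using r by (simp add: norm_divide power_divide)
  have meas': "F' \<in> borel_measurable (lebesgue_on unit_cube)"
    unfolding F'_def using meas by measurable
  have fin: "finite_measure (lebesgue_on (unit_cube :: (real^'d) set))"
    unfolding unit_cube_def by (intro finite_measure_lebesgue_on lmeasurable_cbox)
  have sq: "integrable (lebesgue_on unit_cube) (\<lambda>x. (norm (F' x))\<^sup>2)"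
  proof (rule finite_measure.integrable_const_bound[OF fin, where B="(M / r)\<^sup>2"])
    show "AE x in lebesgue_on unit_cube. norm ((norm (F' x))\<^sup>2) \<le> (M / r)\<^sup>2"
    proof (rule AE_I2)
      fix x :: "real^'d" assume "x \<in> space (lebesgue_on unit_cube)"
      then have x: "x \<in> unit_cube" by simp
      have "norm (F' x) \<le> M / r" unfolding F'_def using bnd[OF x] r
        by (simp add: norm_divide divide_right_mono)
      then show "norm ((norm (F' x))\<^sup>2) \<le> (M / r)\<^sup>2" by (simp add: power_mono)
    qed
    show "(\<lambda>x. (norm (F' x))\<^sup>2) \<in> borel_measurable (lebesgue_on unit_cube)"
      using meas' by measurable
  qed
  have sums': "(\<lambda>k. rvec \<beta> \<gamma> k * (norm (fourier_coeff F' k))\<^sup>2) summable_on UNIV"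
    unfolding eqn divide_inverse using sums by (rule summable_on_cmult_left)
  have rep': "F' y = (\<Sum>\<^sub>\<infinity>k. fourier_coeff F' k * omega k y)" if "y \<in> unit_cube" for y
  proof -
    have "F' y = (\<Sum>\<^sub>\<infinity>k. b k * omega k y) * inverse (complex_of_real r)"
      unfolding F'_def rep[OF that] by (simp add: divide_inverse)
    also have "\<dots> = (\<Sum>\<^sub>\<infinity>k. b k * omega k y * inverse (complex_of_real r))"
      by (rule infsum_cmult_left'[symmetric])
    also have "\<dots> = (\<Sum>\<^sub>\<infinity>k. fourier_coeff F' k * omega k y)"
      unfolding coef' by (simp add: divide_inverse mult_ac)
    finally show ?thesis .
  qed
  have "in_H \<beta> \<gamma> F'" unfolding in_H_def using meas' sq sums' rep' by auto
  moreover have "H_norm_sq \<beta> \<gamma> F' = (\<Sum>\<^sub>\<infinity>k. rvec \<beta> \<gamma> k * (norm (b k))\<^sup>2) / r\<^sup>2"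
    unfolding H_norm_sq_def eqn by (simp add: divide_inverse infsum_cmult_left')
  ultimately show ?thesis unfolding F'_def by simp
qed

lemma wce_apply:
  fixes F :: "real^'d::finite \<Rightarrow> complex" and b :: "int^'d \<Rightarrow> complex" and z :: "nat \<Rightarrow> real^'d"
  assumes meas: "F \<in> borel_measurable (lebesgue_on unit_cube)"
    and bnd: "\<And>y. y \<in> unit_cube \<Longrightarrow> norm (F y) \<le> M"
    and coef: "\<And>k. fourier_coeff F k = b k"
    and sums: "(\<lambda>k. rvec \<beta> \<gamma> k * (norm (b k))\<^sup>2) summable_on UNIV"
    and rep: "\<And>y. y \<in> unit_cube \<Longrightarrow> F y = (\<Sum>\<^sub>\<infinity>k. b k * omega k y)"
    and hyp: "wce \<beta> \<gamma> L z \<le> ereal W"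
  shows "norm (cube_integral F - (1 / of_nat L) * (\<Sum>l<L. F (z l)))
         \<le> sqrt (\<Sum>\<^sub>\<infinity>k. rvec \<beta> \<gamma> k * (norm (b k))\<^sup>2) * W"
proof -
  define S where "S = (\<Sum>\<^sub>\<infinity>k. rvec \<beta> \<gamma> k * (norm (b k))\<^sup>2)"
  define E where "E = norm (cube_integral F - (1 / of_nat L) * (\<Sum>l<L. F (z l)))"
  have S0: "S \<ge> 0" unfolding S_def
  proof (intro infsum_nonneg)
    fix k
    have "0 \<le> rvec \<beta> \<gamma> k" using rvec_ge1[of \<beta> \<gamma> k] by simp
    then show "0 \<le> rvec \<beta> \<gamma> k * (norm (b k))\<^sup>2" by simp
  qed
  have E0: "E \<ge> 0" unfolding E_def by simp
  have main: "E \<le> r * W" if r: "r > 0" "S \<le> r\<^sup>2" for r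
  proof -
    define F' where "F' = (\<lambda>y. F y / complex_of_real r)"
    have H: "in_H \<beta> \<gamma> F' \<and> H_norm_sq \<beta> \<gamma> F' = S / r\<^sup>2"
      unfolding F'_def S_def using meas bnd coef sums rep r(1) by (rule in_H_scale)
    have "S / r\<^sup>2 \<le> 1" using r by (simp add: divide_le_eq)
    then have mem: "F' \<in> {f. in_H \<beta> \<gamma> f \<and> H_norm_sq \<beta> \<gamma> f \<le> 1}" using H by simp
    have "norm (cube_integral F' - (1 / of_nat L) * (\<Sum>l<L. F' (z l))) = E / r"
    proof -
      have "cube_integral F' - (1 / of_nat L) * (\<Sum>l<L. F' (z l))
          = (cube_integral F - (1 / of_nat L) * (\<Sum>l<L. F (z l))) / complex_of_real r"
        unfolding F'_def cube_integral_def by (simp add: sum_divide_distrib[symmetric] diff_divide_distrib)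
      then show ?thesis unfolding E_def using r by (simp add: norm_divide)
    qed
    then have "ereal (E / r) \<le> wce \<beta> \<gamma> L z"
      unfolding wce_def using mem by (metis (no_types, lifting) SUP_upper)
    then have "E / r \<le> W" using order_trans[OF _ hyp] by (metis ereal_less_eq(3))
    then show ?thesis using r by (simp add: divide_le_eq mult.commute)
  qed
  have "E \<le> sqrt S * W"
  proof (cases "S > 0")
    case True
    then show ?thesis using main[of "sqrt S"] by simp
  next
    case False
    then have S: "S = 0" using S0 by simp
    have "E \<le> 0"
    proof (rule ccontr)
      assume "\<not> E \<le> 0"
      then have Ep: "E > 0" by simp
      show False
      proof (cases "W \<le> 0")
        case True
        then show False using main[of 1] S Ep by simp
      next
        case False
        then have "E \<le> (E / (2 * W)) * W" using main[of "E / (2 * W)"] S Ep by simp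
        also have "\<dots> = E / 2" using False by simp
        finally show False using Ep by simp
      qed
    qed
    then show ?thesis using S E0 by simp
  qed
  then show ?thesis unfolding E_def S_def .
qed

lemma rzeta_nonneg: "s > 1 \<Longrightarrow> rzeta s \<ge> 0"
  unfolding rzeta_def by (intro suminf_nonneg summable_zeta) auto

lemma err2_bound:
  fixes g :: "real^'d::finite \<Rightarrow> real" and \<gamma> :: "real^'d" and z :: "nat \<Rightarrow> real^'d"
  assumes g: "\<forall>j. 0 < \<gamma>$j \<and> \<gamma>$j \<le> 1" and a: "\<alpha> \<ge> 1/2" and d: "\<delta> > 0"
    and be: "0 \<le> \<beta>" "\<beta> = \<alpha> - 1/2 - \<delta>" and nu: "\<nu> \<ge> 1"
    and inA: "in_A \<alpha> \<gamma> (\<lambda>y. complex_of_real (g y))"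
    and hyp: "wce \<beta> \<gamma> L z \<le> ereal W" and W0: "W \<ge> 0"
  shows "err2 g (Rect \<alpha> \<nu> \<gamma>) N c x L z
     \<le> mubar N c * cconst \<alpha> \<gamma> * A_norm \<alpha> \<gamma> (\<lambda>y. complex_of_real (g y))
        * (\<nu> powr (real CARD('d) / 2) * zeta_dd \<delta> CARD('d)) * W"
proof -
  define G where "G = (\<lambda>y. complex_of_real (g y))"
  define K where "K = Rect \<alpha> \<nu> \<gamma>"
  define a where "a = fourier_coeff G"
  define ph where "ph = phi_check N c x"
  define mu where "mu = mubar N c"
  define b where "b = (\<lambda>k. \<Sum>h\<in>K. ph h * a (k + h))"
  define F where "F = (\<lambda>y. G y * phiK K N c x y)"
  define A where "A = A_norm \<alpha> \<gamma> G"
  define Z where "Z = 1 + 2 * rzeta (1 + 2 * \<delta>)"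
  have inA': "in_A \<alpha> \<gamma> G" using inA unfolding G_def .
  have K: "finite K" unfolding K_def using g a by (rule finite_Rect)
  have mu0: "mu \<ge> 0" unfolding mu_def mubar_def by (auto intro: sum_nonneg)
  have Gint: "integrable (lebesgue_on unit_cube) G" using inA' unfolding in_A_def by auto
  have wsum: "(\<lambda>k. sqrt (rvec \<alpha> \<gamma> k) * norm (a k)) summable_on UNIV"
    using inA' unfolding in_A_def a_def by auto
  have A0: "A \<ge> 0" unfolding A_def A_norm_def
    using rvec_ge1[of \<alpha> \<gamma>] by (intro infsum_nonneg mult_nonneg_nonneg) (auto intro: order_trans[OF zero_le_one])
  have Z0: "Z > 0" unfolding Z_def using rzeta_nonneg[of "1 + 2*\<delta>"] d by simp
  have meas: "F \<in> borel_measurable (lebesgue_on unit_cube)"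
  proof -
    have "phiK K N c x \<in> borel_measurable (lebesgue_on unit_cube)"
      by (intro continuous_imp_measurable_on_sets_lebesgue cube_sets continuous_phiK)
    then show ?thesis unfolding F_def using Gint by measurable
  qed
  have bnd: "norm (F y) \<le> (\<Sum>\<^sub>\<infinity>k. norm (a k)) * (real (card K) * mu)" if "y \<in> unit_cube" for y
    unfolding F_def norm_mult a_def mu_def
    using G_bounded[OF inA' that] phiK_bounded[of K N c x y]
    by (intro mult_mono) (auto intro: infsum_nonneg)
  have coef: "fourier_coeff F k = b k" for k
    unfolding F_def b_def ph_def a_def by (rule fourier_coeff_mult_phiK[OF Gint])
  have Hb: "(\<lambda>k. rvec \<beta> \<gamma> k * (norm (b k))\<^sup>2) summable_on UNIV \<and>
         (\<Sum>\<^sub>\<infinity>k. rvec \<beta> \<gamma> k * (norm (b k))\<^sup>2)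
           \<le> mu\<^sup>2 * (cconst \<alpha> \<gamma>)\<^sup>2 * A\<^sup>2 * (\<Sum>h\<in>K. rvec \<beta> \<gamma> h)"
    unfolding b_def A_def A_norm_def a_def[symmetric]
    using g be a d K wsum norm_phi_check[of N c x] mu0
    by (intro Hnorm_bound) (auto simp: ph_def mu_def)
  have rep: "F y = (\<Sum>\<^sub>\<infinity>k. b k * omega k y)" if "y \<in> unit_cube" for y
    unfolding F_def b_def ph_def a_def using inA' that by (rule F_rep)
  have e2: "err2 g K N c x L z \<le> sqrt (\<Sum>\<^sub>\<infinity>k. rvec \<beta> \<gamma> k * (norm (b k))\<^sup>2) * W"
  proof -
    have "norm (cube_integral F - (1 / of_nat L) * (\<Sum>l<L. F (z l)))
         \<le> sqrt (\<Sum>\<^sub>\<infinity>k. rvec \<beta> \<gamma> k * (norm (b k))\<^sup>2) * W"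
      using meas bnd coef conjunct1[OF Hb] rep hyp by (rule wce_apply)
    then show ?thesis unfolding err2_def F_def G_def .
  qed
  have KS: "(\<Sum>h\<in>K. rvec \<beta> \<gamma> h) \<le> (\<nu> * Z) ^ CARD('d)"
    unfolding K_def Z_def using g a d be nu by (rule Rect_rvec_sum)
  have "(\<Sum>\<^sub>\<infinity>k. rvec \<beta> \<gamma> k * (norm (b k))\<^sup>2) \<le> mu\<^sup>2 * (cconst \<alpha> \<gamma>)\<^sup>2 * A\<^sup>2 * (\<nu> * Z) ^ CARD('d)"
    by (rule order_trans[OF conjunct2[OF Hb]]) (intro mult_left_mono KS; simp)
  also have "\<dots> = (mu * cconst \<alpha> \<gamma> * A * (\<nu> powr (real CARD('d) / 2) * Z powr (real CARD('d) / 2)))\<^sup>2"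
  proof -
    have "(\<nu> * Z) ^ CARD('d) = (\<nu> powr (real CARD('d) / 2) * Z powr (real CARD('d) / 2))\<^sup>2"
    proof -
      have p: "\<nu> * Z > 0" using nu Z0 by simp
      have "(\<nu> * Z) ^ CARD('d) = (\<nu> * Z) powr (real CARD('d))"
        using p by (rule powr_realpow[symmetric])
      also have "\<dots> = ((\<nu> * Z) powr (real CARD('d) / 2))\<^sup>2"
        unfolding power2_eq_square powr_add[symmetric] by simp
      also have "(\<nu> * Z) powr (real CARD('d) / 2) = \<nu> powr (real CARD('d) / 2) * Z powr (real CARD('d) / 2)"
        using nu Z0 by (simp add: powr_mult)
      finally show ?thesis .
    qed
    then show ?thesis by (simp add: power_mult_distrib)
  qed
  finally have SQ: "(\<Sum>\<^sub>\<infinity>k. rvec \<beta> \<gamma> k * (norm (b k))\<^sup>2) \<le> (mu * cconst \<alpha> \<gamma> * A * (\<nu> powr (real CARD('d) / 2) * Z powr (real CARD('d) / 2)))\<^sup>2" .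
  have Y0: "0 \<le> mu * cconst \<alpha> \<gamma> * A * (\<nu> powr (real CARD('d) / 2) * Z powr (real CARD('d) / 2))"
    using mu0 A0 by (auto simp: cconst_def intro!: mult_nonneg_nonneg prod_nonneg)
  have "sqrt (\<Sum>\<^sub>\<infinity>k. rvec \<beta> \<gamma> k * (norm (b k))\<^sup>2)
      \<le> mu * cconst \<alpha> \<gamma> * A * (\<nu> powr (real CARD('d) / 2) * Z powr (real CARD('d) / 2))"
    using real_sqrt_le_mono[OF SQ] Y0 by simp
  then have "err2 g K N c x L z \<le> mu * cconst \<alpha> \<gamma> * A * (\<nu> powr (real CARD('d) / 2) * Z powr (real CARD('d) / 2)) * W"
    using e2 W0 by (meson mult_right_mono order_trans)
  then show ?thesis unfolding K_def mu_def A_def G_def zeta_dd_def Z_def .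
qed

lemma Cconst_nonneg: "Cconst \<gamma> \<beta> \<tau> \<ge> 0"
  unfolding Cconst_def by (intro mult_nonneg_nonneg prod_nonneg) auto

theorem theorem3p13:
  fixes \<alpha> \<delta> \<tau> \<nu> :: real
    and \<gamma> :: "real^'d::{finite,linorder}"
    and g :: "real^'d::{finite,linorder} \<Rightarrow> real"
    and N :: nat and x :: "nat \<Rightarrow> real^'d::{finite,linorder}" and c :: "nat \<Rightarrow> real"
    and L :: nat and gv :: "nat^'d::{finite,linorder}"
  assumes "\<alpha> > 1"
    and "0 < \<delta>" and "\<delta> < \<alpha> - 1"
    and "0 < \<tau>" and "\<tau> \<le> \<alpha> - 1 - \<delta>"
    and "\<forall>j. \<gamma> $ j \<le> 1 \<and> 0 < \<gamma> $ j"
    and "\<forall>i j. i \<le> j \<longrightarrow> \<gamma> $ j \<le> \<gamma> $ i"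
    and "in_A \<alpha> \<gamma> (\<lambda>y. complex_of_real (g y))"
    and "\<forall>n\<in>{1..N}. x n \<in> unit_cube"
    and "prime L"
    and "\<forall>j. 1 \<le> gv $ j \<and> gv $ j \<le> L - 1"
    and "\<forall>\<tau>'. 0 < \<tau>' \<and> \<tau>' \<le> (\<alpha> - 1/2 - \<delta>) - 1/2 \<longrightarrow>
           wce (\<alpha> - 1/2 - \<delta>) \<gamma> L (lattice_pt L gv)
             \<le> ereal (Cconst \<gamma> (\<alpha> - 1/2 - \<delta>) \<tau>' * real L powr (- (\<alpha> - 1/2 - \<delta>) + \<tau>'))"
    and "\<nu> > 1"
  shows "norm ((1 / of_nat N) * (\<Sum>n=1..N. complex_of_real (c n * g (x n)))
            - (1 / of_nat L) * (\<Sum>l<L. complex_of_real (g (lattice_pt L gv l))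
                 * phiK (Rect \<alpha> \<nu> \<gamma>) N c x (lattice_pt L gv l)))
         \<le> err1 g (Rect \<alpha> \<nu> \<gamma>) N c x + err2 g (Rect \<alpha> \<nu> \<gamma>) N c x L (lattice_pt L gv)
       \<and> err1 g (Rect \<alpha> \<nu> \<gamma>) N c x + err2 g (Rect \<alpha> \<nu> \<gamma>) N c x L (lattice_pt L gv)
         \<le> A_norm \<alpha> \<gamma> (\<lambda>y. complex_of_real (g y))
            * (1 / sqrt \<nu> + \<nu> powr (real CARD('d) / 2) / real L powr (\<alpha> - 1/2 - \<delta> - \<tau>)
               * cconst \<alpha> \<gamma> * zeta_dd \<delta> CARD('d) * Cconst \<gamma> (\<alpha> - 1/2 - \<delta>) \<tau>)
            * mubar N c"
proof
  define K where "K = Rect \<alpha> \<nu> \<gamma>"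
  define z where "z = lattice_pt L gv"
  define I where "I = cube_integral (\<lambda>y. of_real (g y) * phiK K N c x y)"
  show "norm ((1 / of_nat N) * (\<Sum>n=1..N. complex_of_real (c n * g (x n)))
            - (1 / of_nat L) * (\<Sum>l<L. complex_of_real (g (lattice_pt L gv l))
                 * phiK (Rect \<alpha> \<nu> \<gamma>) N c x (lattice_pt L gv l)))
         \<le> err1 g (Rect \<alpha> \<nu> \<gamma>) N c x + err2 g (Rect \<alpha> \<nu> \<gamma>) N c x L (lattice_pt L gv)"
    unfolding err1_def err2_def K_def[symmetric] z_def[symmetric] I_def[symmetric]
    by (rule order_trans[OF _ norm_triangle_ineq]) simp
next
  define \<beta> where "\<beta> = \<alpha> - 1/2 - \<delta>"
  define W where "W = Cconst \<gamma> \<beta> \<tau> * real L powr (- \<beta> + \<tau>)"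
  define A where "A = A_norm \<alpha> \<gamma> (\<lambda>y. complex_of_real (g y))"
  define mu where "mu = mubar N c"
  have g: "\<forall>j. 0 < \<gamma>$j \<and> \<gamma>$j \<le> 1" using assms(6) by auto
  have hyp: "wce \<beta> \<gamma> L (lattice_pt L gv) \<le> ereal W"
    using assms(12) assms(4,5) unfolding W_def \<beta>_def by auto
  have W0: "W \<ge> 0" unfolding W_def using Cconst_nonneg[of \<gamma> \<beta> \<tau>] by (intro mult_nonneg_nonneg) auto
  have e1: "err1 g (Rect \<alpha> \<nu> \<gamma>) N c x \<le> A * (1 / sqrt \<nu>) * mu"
    unfolding A_def mu_def
    using assms(8,9) assms(13)
    by (intro err1_bound finite_Rect not_Rect_rvec) (use g assms(1) in auto)
  have e2: "err2 g (Rect \<alpha> \<nu> \<gamma>) N c x L (lattice_pt L gv)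
     \<le> mu * cconst \<alpha> \<gamma> * A * (\<nu> powr (real CARD('d) / 2) * zeta_dd \<delta> CARD('d)) * W"
    unfolding A_def mu_def
    using g assms(1,2,3,8) assms(13) hyp W0 unfolding \<beta>_def
    by (intro err2_bound) auto
  have Lpos: "real L > 0" using assms(10) prime_gt_0_nat by auto
  have LW: "real L powr (- \<beta> + \<tau>) = 1 / real L powr (\<alpha> - 1/2 - \<delta> - \<tau>)"
  proof -
    have "- \<beta> + \<tau> = - (\<alpha> - 1/2 - \<delta> - \<tau>)" unfolding \<beta>_def by simp
    then show ?thesis by (simp only: powr_minus_divide)
  qed
  show "err1 g (Rect \<alpha> \<nu> \<gamma>) N c x + err2 g (Rect \<alpha> \<nu> \<gamma>) N c x L (lattice_pt L gv)
         \<le> A_norm \<alpha> \<gamma> (\<lambda>y. complex_of_real (g y))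
            * (1 / sqrt \<nu> + \<nu> powr (real CARD('d) / 2) / real L powr (\<alpha> - 1/2 - \<delta> - \<tau>)
               * cconst \<alpha> \<gamma> * zeta_dd \<delta> CARD('d) * Cconst \<gamma> (\<alpha> - 1/2 - \<delta>) \<tau>)
            * mubar N c"
  proof -
    have WW: "W = Cconst \<gamma> (\<alpha> - 1/2 - \<delta>) \<tau> / real L powr (\<alpha> - 1/2 - \<delta> - \<tau>)"
      unfolding W_def LW by (simp add: \<beta>_def)
    have Lp: "real L powr (\<alpha> - 1/2 - \<delta> - \<tau>) > 0" using Lpos by simp
    have "err1 g (Rect \<alpha> \<nu> \<gamma>) N c x + err2 g (Rect \<alpha> \<nu> \<gamma>) N c x L (lattice_pt L gv)
        \<le> A * (1 / sqrt \<nu>) * mu + mu * cconst \<alpha> \<gamma> * A * (\<nu> powr (real CARD('d) / 2) * zeta_dd \<delta> CARD('d)) * W"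
      by (rule add_mono[OF e1 e2])
    also have "\<dots> = A * (1 / sqrt \<nu> + \<nu> powr (real CARD('d) / 2) / real L powr (\<alpha> - 1/2 - \<delta> - \<tau>)
               * cconst \<alpha> \<gamma> * zeta_dd \<delta> CARD('d) * Cconst \<gamma> (\<alpha> - 1/2 - \<delta>) \<tau>) * mu"
      unfolding WW using Lp by (simp add: field_simps)
    finally show ?thesis unfolding A_def mu_def .
  qed
qed


end
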